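(* Let $\tilde{\mathcal M}$ be the absorbing MDP built from an intervention rule $\mathcal G$ with constant $\tilde R\le0$. For every policy $\pi$, $$|\tilde R|\,P_{\mathcal G}(\pi)\le V^\pi(d_0)-\tilde V^\pi(d_0)\le\Big(|\tilde R|+\frac1{1-\gamma}\Big)P_{\mathcal G}(\pi).$$
   Context: $\mathcal M=(\mathcal S,\mathcal A,P,r,\gamma)$ is a discounted MDP with discrete state and action spaces, reward $r(s,a)\in[0,1]$, discount $\gamma\in[0,1)$, initial distribution $d_0$. $\mathcal S$ contains two distinguished states $s_\triangleright,s_\circ$; $\mathcal S_{\mathrm{safe}}=\mathcal S\setminus\{s_\triangleright,s_\circ\}$. $V^\pi(d_0)=\mathbb E[\sum_{t\ge0}\gamma^tr(s_t,a_t)]$ for trajectories of the stationary policy $\pi$ in $\mathcal M$ with $s_0\sim d_0$ (law $\rho^\pi$). Intervention rule: a triple $\mathcal G=(\bar Q,\mu,\eta)$ with backup policy $\mu$, $\eta\in[0,1]$, $\bar Q:\mathcal S_{\mathrm{safe}}\times\mathcal A\to[0,1]$; intervention set $\mathcal I=\{(s,a)\in\mathcal S_{\mathrm{safe}}\times\mathcal A:\bar Q(s,a)-\mathbb E_{a'\sim\mu(\cdot|s)}\bar Q(s,a')>\eta\}$. Absorbing MDP: $\tilde{\mathcal M}=(\mathcal S\cup\{s_\dagger\},\mathcal A,\tilde P,\tilde r,\gamma)$ with new state $s_\dagger$: $\tilde r(s,a)=\tilde R$ if $(s,a)\in\mathcal I$, $\tilde r(s_\dagger,a)=0$, $\tilde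 r=r$ otherwise; $\tilde P(\cdot|s,a)$ is the point mass at $s_\dagger$ if $(s,a)\in\mathcal I$ or $s=s_\dagger$, and $\tilde P=P$ otherwise. Policies are extended to $s_\dagger$ arbitrarily; $\tilde V^\pi(d_0)$ is the value of $\pi$ in $\tilde{\mathcal M}$ from $d_0$. $P_{\mathcal G}(\pi)=(1-\gamma)\sum_{h\ge0}\gamma^h\Pr_{\rho^\pi}(\exists t\le h:(s_t,a_t)\in\mathcal I)$. *)

theory Defs
  imports "HOL-Probability.Probability"
begin

text \<open>Law of the trajectory prefix (s_0,a_0),...,(s_h,a_h) of a stationary policy pi
  in an MDP with transition kernel P, started from d0. The last list element is time h.\<close>
fun traj :: "'s pmf \<Rightarrow> ('s \<Rightarrow> 'a pmf) \<Rightarrow> ('s \<Rightarrow> 'a \<Rightarrow> 's pmf) \<Rightarrow> nat \<Rightarrow> ('s \<times> 'a) list pmf" where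
  "traj d0 \<pi> P 0 = bind_pmf d0 (\<lambda>s. map_pmf (\<lambda>a. [(s, a)]) (\<pi> s))"
| "traj d0 \<pi> P (Suc h) = bind_pmf (traj d0 \<pi> P h) (\<lambda>xs.
      bind_pmf (P (fst (last xs)) (snd (last xs))) (\<lambda>s'. map_pmf (\<lambda>a. xs @ [(s', a)]) (\<pi> s')))"

definition value_fn :: "'s pmf \<Rightarrow> ('s \<Rightarrow> 'a pmf) \<Rightarrow> ('s \<Rightarrow> 'a \<Rightarrow> 's pmf) \<Rightarrow> ('s \<Rightarrow> 'a \<Rightarrow> real) \<Rightarrow> real \<Rightarrow> real" where
  "value_fn d0 \<pi> P r \<gamma> = (\<Sum>t. \<gamma> ^ t *
      measure_pmf.expectation (traj d0 \<pi> P t) (\<lambda>xs. r (fst (last xs)) (snd (last xs))))"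

text \<open>Intervention set of the rule (Qbar, mu, eta); S_safe excludes s_tri and s_circ.\<close>
definition interv_set :: "'s \<Rightarrow> 's \<Rightarrow> ('s \<Rightarrow> 'a \<Rightarrow> real) \<Rightarrow> ('s \<Rightarrow> 'a pmf) \<Rightarrow> real \<Rightarrow> ('s \<times> 'a) set" where
  "interv_set s_tri s_circ Qb \<mu> \<eta> = {(s, a). s \<noteq> s_tri \<and> s \<noteq> s_circ \<and>
      Qb s a - measure_pmf.expectation (\<mu> s) (\<lambda>a'. Qb s a') > \<eta>}"

text \<open>Absorbing MDP on 's option, where None is the new absorbing state s_dagger.\<close>
definition abs_P :: "('s \<times> 'a) set \<Rightarrow> ('s \<Rightarrow> 'a \<Rightarrow> 's pmf) \<Rightarrow> 's option \<Rightarrow> 'a \<Rightarrow> 's option pmf" where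
  "abs_P I P so a = (case so of None \<Rightarrow> return_pmf None
     | Some s \<Rightarrow> (if (s, a) \<in> I then return_pmf None else map_pmf Some (P s a)))"

definition abs_r :: "('s \<times> 'a) set \<Rightarrow> real \<Rightarrow> ('s \<Rightarrow> 'a \<Rightarrow> real) \<Rightarrow> 's option \<Rightarrow> 'a \<Rightarrow> real" where
  "abs_r I Rt r so a = (case so of None \<Rightarrow> 0
     | Some s \<Rightarrow> (if (s, a) \<in> I then Rt else r s a))"

definition interv_prob :: "'s pmf \<Rightarrow> ('s \<Rightarrow> 'a pmf) \<Rightarrow> ('s \<Rightarrow> 'a \<Rightarrow> 's pmf) \<Rightarrow> real \<Rightarrow> ('s \<times> 'a) set \<Rightarrow> real" where
  "interv_prob d0 \<pi> P \<gamma> I = (1 - \<gamma>) * (\<Sum>h. \<gamma> ^ h *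
      measure_pmf.prob (traj d0 \<pi> P h) {xs. \<exists>x\<in>set xs. x \<in> I})"

end

theory Submission
  imports Defs
begin

fun cut :: "('s \<times> 'a) set \<Rightarrow> ('s \<times> 'a) list \<Rightarrow> ('s \<times> 'a) list" where
  "cut I [] = []"
| "cut I (x # xs) = (if x \<in> I then [x] else x # cut I xs)"

lemma cut_nI: "(\<forall>y\<in>set xs. y \<notin> I) \<Longrightarrow> cut I xs = xs"
  by (induction xs) auto

lemma cut_app: "(\<exists>y\<in>set xs. y \<in> I) \<Longrightarrow> cut I (xs @ ys) = cut I xs"
  by (induction xs) auto

lemma cut_app2: "(\<forall>y\<in>set xs. y \<notin> I) \<Longrightarrow> cut I (xs @ ys) = xs @ cut I ys"
  by (induction xs) auto

lemma cut_len: "length (cut I xs) \<le> length xs"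
  by (induction xs) auto

lemma cut_last: "(\<exists>y\<in>set xs. y \<in> I) \<Longrightarrow> cut I xs \<noteq> [] \<and> last (cut I xs) \<in> I"
  by (induction xs) auto

definition Kp :: "('s \<times> 'a) set \<Rightarrow> ('s \<Rightarrow> 'a \<Rightarrow> 's pmf) \<Rightarrow> ('s \<Rightarrow> 'a pmf) \<Rightarrow> ('s \<times> 'a) list \<times> nat \<Rightarrow> (('s \<times> 'a) list \<times> nat) pmf" where
  "Kp I P \<pi> pn = (if length (fst pn) < snd pn \<or> last (fst pn) \<in> I then return_pmf (fst pn, Suc (snd pn))
     else bind_pmf (P (fst (last (fst pn))) (snd (last (fst pn))))
       (\<lambda>s'. map_pmf (\<lambda>a. (fst pn @ [(s', a)], Suc (snd pn))) (\<pi> s')))"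

definition isS :: "'s option \<times> 'a \<Rightarrow> bool" where "isS y = (fst y \<noteq> None)"

definition strip :: "('s option \<times> 'a) list \<Rightarrow> ('s \<times> 'a) list \<times> nat" where
  "strip ys = (map (\<lambda>(so, a). (the so, a)) (takeWhile isS ys), length ys)"

lemma traj_nonempty: "xs \<in> set_pmf (traj d0 \<pi> P h) \<Longrightarrow> xs \<noteq> []"
  by (induction h arbitrary: xs) auto

lemma traj_map_butlast: "map_pmf butlast (traj d0 \<pi> P (Suc h)) = traj d0 \<pi> P h"
  by (simp add: map_bind_pmf map_pmf_comp bind_return_pmf')

lemma traj0_butlast: "xs \<in> set_pmf (traj d0 \<pi> P 0) \<Longrightarrow> butlast xs = []"
  by auto

lemma orig_step:
  "map_pmf (\<lambda>xs. (cut I xs, length xs)) (traj d0 \<pi> P (Suc h))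
   = bind_pmf (map_pmf (\<lambda>xs. (cut I xs, length xs)) (traj d0 \<pi> P h)) (Kp I P \<pi>)"
proof -
  have "map_pmf (\<lambda>xs. (cut I xs, length xs)) (traj d0 \<pi> P (Suc h)) =
     bind_pmf (traj d0 \<pi> P h) (\<lambda>xs. bind_pmf (P (fst (last xs)) (snd (last xs)))
        (\<lambda>s'. map_pmf (\<lambda>a. (cut I (xs @ [(s', a)]), Suc (length xs))) (\<pi> s')))"
    by (simp add: map_bind_pmf map_pmf_comp)
  also have "\<dots> = bind_pmf (traj d0 \<pi> P h) (\<lambda>xs. Kp I P \<pi> (cut I xs, length xs))"
  proof (rule bind_pmf_cong[OF refl])
    fix xs assume "xs \<in> set_pmf (traj d0 \<pi> P h)"
    hence ne: "xs \<noteq> []" by (rule traj_nonempty)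
    show "bind_pmf (P (fst (last xs)) (snd (last xs)))
        (\<lambda>s'. map_pmf (\<lambda>a. (cut I (xs @ [(s', a)]), Suc (length xs))) (\<pi> s')) = Kp I P \<pi> (cut I xs, length xs)"
    proof (cases "\<exists>y\<in>set xs. y \<in> I")
      case True
      then show ?thesis using cut_last[OF True] by (simp add: cut_app Kp_def)
    next
      case False
      hence "cut I xs = xs" by (simp add: cut_nI)
      moreover have "last xs \<notin> I" using False ne by auto
      ultimately show ?thesis using False by (simp add: Kp_def cut_app2 if_distrib cong: if_cong)
    qed
  qed
  finally show ?thesis by (simp add: bind_map_pmf)
qed

lemma tw_less: "(\<exists>y\<in>set xs. \<not> P y) \<Longrightarrow> length (takeWhile P xs) < length xs"
  by (induction xs) auto

lemma abs_inv:
  "ys \<in> set_pmf (traj (map_pmf Some d0) \<pi>t (abs_P I P) h) \<Longrightarrow>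
     ys \<noteq> [] \<and> (fst (last ys) \<noteq> None \<longrightarrow> (\<forall>y\<in>set ys. fst y \<noteq> None))"
proof (induction h arbitrary: ys)
  case 0 then show ?case by auto
next
  case (Suc h)
  then obtain xs s' a where xs: "xs \<in> set_pmf (traj (map_pmf Some d0) \<pi>t (abs_P I P) h)"
    and s': "s' \<in> set_pmf (abs_P I P (fst (last xs)) (snd (last xs)))" and ys: "ys = xs @ [(s', a)]"
    by auto
  have "s' \<noteq> None \<Longrightarrow> fst (last xs) \<noteq> None"
    using s' by (auto simp: abs_P_def split: option.splits)
  then show ?case using Suc.IH[OF xs] ys by auto
qed

lemma abs_step:
  assumes ext: "\<And>s. \<pi>t (Some s) = \<pi> s"
  shows "map_pmf strip (traj (map_pmf Some d0) \<pi>t (abs_P I P) (Suc h))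
   = bind_pmf (map_pmf strip (traj (map_pmf Some d0) \<pi>t (abs_P I P) h)) (Kp I P \<pi>)"
proof -
  let ?T = "traj (map_pmf Some d0) \<pi>t (abs_P I P) h"
  have "map_pmf strip (traj (map_pmf Some d0) \<pi>t (abs_P I P) (Suc h)) =
     bind_pmf ?T (\<lambda>ys. bind_pmf (abs_P I P (fst (last ys)) (snd (last ys)))
        (\<lambda>s'. map_pmf (\<lambda>a. strip (ys @ [(s', a)])) (\<pi>t s')))"
    by (simp add: map_bind_pmf map_pmf_comp)
  also have "\<dots> = bind_pmf ?T (\<lambda>ys. Kp I P \<pi> (strip ys))"
  proof (rule bind_pmf_cong[OF refl])
    fix ys assume "ys \<in> set_pmf ?T"
    hence ne: "ys \<noteq> []" using abs_inv by blast
    show "bind_pmf (abs_P I P (fst (last ys)) (snd (last ys)))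
        (\<lambda>s'. map_pmf (\<lambda>a. strip (ys @ [(s', a)])) (\<pi>t s')) = Kp I P \<pi> (strip ys)"
    proof (cases "\<forall>y\<in>set ys. isS y")
      case False
      hence tw: "\<And>zs. takeWhile isS (ys @ zs) = takeWhile isS ys"
        by (meson takeWhile_append1)
      have "length (takeWhile isS ys) < length ys"
        using False by (auto simp: tw_less)
      then show ?thesis unfolding strip_def tw by (simp add: Kp_def)
    next
      case True
      hence tw: "takeWhile isS ys = ys" by (simp add: takeWhile_eq_all_conv)
      obtain s a where la: "last ys = (Some s, a)" using True ne
        by (metis isS_def fst_conv last_in_set option.exhaust prod.collapse)
      have lp: "last (map (\<lambda>(so, a). (the so, a)) ys) = (s, a)"
        using la ne by (simp add: last_map)
      show ?thesis
      proof (cases "(s, a) \<in> I")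
        case True
        have "takeWhile isS (ys @ [(None, a')]) = ys" for a'
          using \<open>\<forall>y\<in>set ys. isS y\<close> by (simp add: takeWhile_append2 isS_def)
        then show ?thesis using True la lp ne
          unfolding strip_def tw by (simp add: abs_P_def Kp_def bind_return_pmf)
      next
        case False
        have "takeWhile isS (ys @ [(Some s', a')]) = ys @ [(Some s', a')]" for s' a'
          using \<open>\<forall>y\<in>set ys. isS y\<close> by (simp add: takeWhile_eq_all_conv isS_def)
        then show ?thesis using False la lp ne
          unfolding strip_def tw by (simp add: abs_P_def Kp_def bind_map_pmf ext)
      qed
    qed
  qed
  finally show ?thesis by (simp add: bind_map_pmf)
qed

lemma coupling:
  assumes ext: "\<And>s. \<pi>t (Some s) = \<pi> s"
  shows "map_pmf strip (traj (map_pmf Some d0) \<pi>t (abs_P I P) h)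
       = map_pmf (\<lambda>xs. (cut I xs, length xs)) (traj d0 \<pi> P h)"
proof (induction h)
  case 0
  show ?case by (simp add: map_bind_pmf map_pmf_comp bind_map_pmf strip_def ext isS_def if_distrib cong: if_cong)
next
  case (Suc h)
  have "map_pmf strip (traj (map_pmf Some d0) \<pi>t (abs_P I P) (Suc h))
   = bind_pmf (map_pmf strip (traj (map_pmf Some d0) \<pi>t (abs_P I P) h)) (Kp I P \<pi>)"
    by (rule abs_step) (rule ext)
  then show ?case by (simp only: orig_step Suc.IH)
qed


lemma pmf_integrable_bnd: "(\<And>x. \<bar>f x\<bar> \<le> B) \<Longrightarrow> integrable (measure_pmf p) (f :: _ \<Rightarrow> real)"
  by (rule measure_pmf.integrable_const_bound[where B=B]) auto

lemma pmf_exp_bnd: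
  assumes "\<And>x. \<bar>f x\<bar> \<le> B" shows "\<bar>measure_pmf.expectation p (f :: _ \<Rightarrow> real)\<bar> \<le> B"
proof -
  have i: "integrable (measure_pmf p) f" by (rule pmf_integrable_bnd[OF assms])
  have "measure_pmf.expectation p f \<le> measure_pmf.expectation p (\<lambda>_. B)"
    using assms by (intro integral_mono i) (auto simp: abs_le_iff)
  moreover have "measure_pmf.expectation p (\<lambda>_. - B) \<le> measure_pmf.expectation p f"
    using assms by (intro integral_mono i) (auto simp: abs_le_iff minus_le_iff)
  ultimately show ?thesis by simp
qed

lemma pmf_exp_cong:
  "(\<And>x. x \<in> set_pmf p \<Longrightarrow> f x = g x) \<Longrightarrow> measure_pmf.expectation p f = measure_pmf.expectation p (g::_\<Rightarrow>real)"
  by (rule integral_cong_AE) (auto simp: AE_measure_pmf_iff)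

lemma summable_bnd:
  assumes "0 \<le> (\<gamma>::real)" "\<gamma> < 1" "\<And>h. \<bar>x h\<bar> \<le> B"
  shows "summable (\<lambda>h. \<gamma> ^ h * x h)"
proof (rule summable_comparison_test[where g = "\<lambda>h. B * \<gamma> ^ h"])
  show "\<exists>N. \<forall>n\<ge>N. norm (\<gamma> ^ n * x n) \<le> B * \<gamma> ^ n"
    using assms by (auto simp: abs_mult mult.commute[of "\<gamma>^_"] intro!: exI[of _ 0] mult_right_mono)
  show "summable (\<lambda>h. B * \<gamma> ^ h)"
    using assms by (intro summable_mult summable_geometric) auto
qed


definition Gf :: "('s \<times> 'a) set \<Rightarrow> real \<Rightarrow> ('s \<Rightarrow> 'a \<Rightarrow> real) \<Rightarrow> ('s \<times> 'a) list \<times> nat \<Rightarrow> real" where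
  "Gf I Rt r pn = (if length (fst pn) = snd pn then
      (if last (fst pn) \<in> I then Rt else r (fst (last (fst pn))) (snd (last (fst pn)))) else 0)"

lemma abs_reward:
  assumes "ys \<in> set_pmf (traj (map_pmf Some d0) \<pi>t (abs_P I P) h)"
  shows "abs_r I Rt r (fst (last ys)) (snd (last ys)) = Gf I Rt r (strip ys)"
proof -
  have ne: "ys \<noteq> []" and inv: "fst (last ys) \<noteq> None \<longrightarrow> (\<forall>y\<in>set ys. fst y \<noteq> None)"
    using abs_inv[OF assms] by auto
  show ?thesis
  proof (cases "fst (last ys)")
    case None
    hence "\<exists>y\<in>set ys. \<not> isS y" using ne by (auto simp: isS_def)
    hence "length (takeWhile isS ys) < length ys" by (rule tw_less)
    then show ?thesis using None by (simp add: abs_r_def Gf_def strip_def)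
  next
    case (Some s)
    hence "\<forall>y\<in>set ys. isS y" using inv by (auto simp: isS_def)
    hence tw: "takeWhile isS ys = ys" by simp
    have "last (map (\<lambda>(so, a). (the so, a)) ys) = (s, snd (last ys))"
      using ne Some by (cases "last ys") (simp add: last_map)
    then show ?thesis using Some unfolding strip_def tw by (simp add: abs_r_def Gf_def)
  qed
qed

lemma orig_G:
  assumes "xs \<noteq> []"
  shows "Gf I Rt r (cut I xs, length xs) = (if (\<exists>y\<in>set (butlast xs). y \<in> I) then 0
     else if last xs \<in> I then Rt else r (fst (last xs)) (snd (last xs)))"
proof -
  have xs: "xs = butlast xs @ [last xs]" using assms by simp
  show ?thesis
  proof (cases "\<exists>y\<in>set (butlast xs). y \<in> I")
    case True
    hence "cut I xs = cut I (butlast xs)" using cut_app[OF True, of "[last xs]"] xs by metis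
    moreover have "length (cut I (butlast xs)) < length xs"
      using cut_len[of I "butlast xs"] assms by (cases xs rule: rev_cases) auto
    ultimately show ?thesis using True by (simp add: Gf_def)
  next
    case False
    hence "\<forall>y\<in>set (butlast xs). y \<notin> I" by blast
    hence "cut I xs = xs" using cut_app2[of "butlast xs" I "[last xs]"] xs
      by (metis cut.simps(1) cut.simps(2))
    then show ?thesis using False by (simp add: Gf_def)
  qed
qed

lemma exp_abs:
  assumes ext: "\<And>s. \<pi>t (Some s) = \<pi> s"
  shows "measure_pmf.expectation (traj (map_pmf Some d0) \<pi>t (abs_P I P) h)
      (\<lambda>ys. abs_r I Rt r (fst (last ys)) (snd (last ys)))
   = measure_pmf.expectation (traj d0 \<pi> P h) (\<lambda>xs. Gf I Rt r (cut I xs, length xs))"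
proof -
  have "measure_pmf.expectation (traj (map_pmf Some d0) \<pi>t (abs_P I P) h)
      (\<lambda>ys. abs_r I Rt r (fst (last ys)) (snd (last ys)))
     = measure_pmf.expectation (traj (map_pmf Some d0) \<pi>t (abs_P I P) h) (\<lambda>ys. Gf I Rt r (strip ys))"
    by (rule pmf_exp_cong) (rule abs_reward)
  also have "\<dots> = measure_pmf.expectation (map_pmf strip (traj (map_pmf Some d0) \<pi>t (abs_P I P) h)) (Gf I Rt r)"
    by simp
  also have "\<dots> = measure_pmf.expectation (map_pmf (\<lambda>xs. (cut I xs, length xs)) (traj d0 \<pi> P h)) (Gf I Rt r)"
    by (simp only: coupling[of \<pi>t \<pi>, OF ext])
  also have "\<dots> = measure_pmf.expectation (traj d0 \<pi> P h) (\<lambda>xs. Gf I Rt r (cut I xs, length xs))"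
    by simp
  finally show ?thesis .
qed

theorem mainTheorem8:
  fixes d0 :: "'s pmf" and P :: "'s \<Rightarrow> 'a \<Rightarrow> 's pmf" and r :: "'s \<Rightarrow> 'a \<Rightarrow> real"
    and \<gamma> :: real and s_tri s_circ :: 's
    and Qb :: "'s \<Rightarrow> 'a \<Rightarrow> real" and \<mu> :: "'s \<Rightarrow> 'a pmf" and \<eta> :: real and Rt :: real
    and \<pi> :: "'s \<Rightarrow> 'a pmf" and \<pi>t :: "'s option \<Rightarrow> 'a pmf"
  assumes r_range: "\<And>s a. 0 \<le> r s a \<and> r s a \<le> 1"
    and gamma: "0 \<le> \<gamma>" "\<gamma> < 1"
    and eta: "0 \<le> \<eta>" "\<eta> \<le> 1"
    and Qb_range: "\<And>s a. s \<noteq> s_tri \<Longrightarrow> s \<noteq> s_circ \<Longrightarrow> 0 \<le> Qb s a \<and> Qb s a \<le> 1"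
    and Rt: "Rt \<le> 0"
    and ext: "\<And>s. \<pi>t (Some s) = \<pi> s"
  defines "I \<equiv> interv_set s_tri s_circ Qb \<mu> \<eta>"
  shows "\<bar>Rt\<bar> * interv_prob d0 \<pi> P \<gamma> I
           \<le> value_fn d0 \<pi> P r \<gamma> - value_fn (map_pmf Some d0) \<pi>t (abs_P I P) (abs_r I Rt r) \<gamma>
       \<and> value_fn d0 \<pi> P r \<gamma> - value_fn (map_pmf Some d0) \<pi>t (abs_P I P) (abs_r I Rt r) \<gamma>
           \<le> (\<bar>Rt\<bar> + 1 / (1 - \<gamma>)) * interv_prob d0 \<pi> P \<gamma> I"
  proof -
  let ?T = "\<lambda>h. traj d0 \<pi> P h"
  define A where "A = {xs::('s\<times>'a) list. \<exists>x\<in>set xs. x \<in> I}"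
  define B where "B = {xs::('s\<times>'a) list. \<exists>x\<in>set (butlast xs). x \<in> I}"
  define F where "F = A - B"
  define a where "a = (\<lambda>h. measure_pmf.prob (?T h) A)"
  define b where "b = (\<lambda>h. measure_pmf.prob (?T h) B)"
  define q where "q = (\<lambda>h. measure_pmf.prob (?T h) F)"
  define e where "e = (\<lambda>h. measure_pmf.expectation (?T h) (\<lambda>xs. r (fst (last xs)) (snd (last xs))))"
  define g where "g = (\<lambda>h. measure_pmf.expectation (?T h) (\<lambda>xs. Gf I Rt r (cut I xs, length xs)))"
  have BA: "B \<subseteq> A" unfolding A_def B_def by (auto dest: in_set_butlastD)
  have q_eq: "q h = a h - b h" for h
    unfolding q_def a_def b_def F_def using BA by (simp add: measure_pmf.finite_measure_Diff)
  have b0: "b 0 = 0"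
    unfolding b_def B_def by (subst measure_pmf_zero_iff) auto
  have bS: "b (Suc h) = a h" for h
  proof -
    have "B = butlast -` A" unfolding A_def B_def by auto
    hence "b (Suc h) = measure_pmf.prob (map_pmf butlast (?T (Suc h))) A" unfolding b_def by simp
    then show ?thesis unfolding a_def by (simp only: traj_map_butlast)
  qed
  have prob_bnd: "\<bar>measure_pmf.prob p X\<bar> \<le> 1" for p :: "('s\<times>'a) list pmf" and X
    by (simp add: measure_pmf.prob_le_1)
  have rb: "\<bar>r s a\<bar> \<le> 1" for s a using r_range[of s a] by auto
  have Gb: "\<bar>Gf I Rt r pn\<bar> \<le> 1 + \<bar>Rt\<bar>" for pn using rb[of "fst (last (fst pn))" "snd (last (fst pn))"]
    by (auto simp: Gf_def)
  have ebnd: "\<bar>e h\<bar> \<le> 1" for h unfolding e_def by (rule pmf_exp_bnd) (rule rb)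
  have gbnd: "\<bar>g h\<bar> \<le> 1 + \<bar>Rt\<bar>" for h unfolding g_def by (rule pmf_exp_bnd) (rule Gb)
  have abnd: "\<bar>a h\<bar> \<le> 1" and bbnd: "\<bar>b h\<bar> \<le> 1" and qbnd: "\<bar>q h\<bar> \<le> 1" for h
    unfolding a_def b_def q_def by (rule prob_bnd)+
  have sum_e: "summable (\<lambda>h. \<gamma>^h * e h)" by (rule summable_bnd[OF gamma ebnd])
  have sum_g: "summable (\<lambda>h. \<gamma>^h * g h)" by (rule summable_bnd[OF gamma gbnd])
  have sum_a: "summable (\<lambda>h. \<gamma>^h * a h)" by (rule summable_bnd[OF gamma abnd])
  have sum_b: "summable (\<lambda>h. \<gamma>^h * b h)" by (rule summable_bnd[OF gamma bbnd])
  have sum_q: "summable (\<lambda>h. \<gamma>^h * q h)" by (rule summable_bnd[OF gamma qbnd])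
  have V: "value_fn d0 \<pi> P r \<gamma> = (\<Sum>h. \<gamma>^h * e h)" unfolding value_fn_def e_def ..
  have Vt: "value_fn (map_pmf Some d0) \<pi>t (abs_P I P) (abs_r I Rt r) \<gamma> = (\<Sum>h. \<gamma>^h * g h)"
    unfolding value_fn_def g_def by (simp only: exp_abs[of \<pi>t \<pi>, OF ext])
  have PG: "interv_prob d0 \<pi> P \<gamma> I = (1 - \<gamma>) * (\<Sum>h. \<gamma>^h * a h)"
    unfolding interv_prob_def a_def A_def ..
  have diff: "value_fn d0 \<pi> P r \<gamma> - value_fn (map_pmf Some d0) \<pi>t (abs_P I P) (abs_r I Rt r) \<gamma>
      = (\<Sum>h. \<gamma>^h * (e h - g h))"
    using suminf_diff[OF sum_e sum_g] by (simp add: V Vt right_diff_distrib)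
  have Sb: "(\<Sum>h. \<gamma>^h * b h) = \<gamma> * (\<Sum>h. \<gamma>^h * a h)"
  proof -
    have "(\<Sum>h. \<gamma>^Suc h * b (Suc h)) = (\<Sum>h. \<gamma>^h * b h) - \<gamma>^0 * b 0"
      by (rule suminf_split_head[OF sum_b])
    moreover have "(\<Sum>h. \<gamma>^Suc h * b (Suc h)) = \<gamma> * (\<Sum>h. \<gamma>^h * a h)"
      using suminf_mult[OF sum_a, of \<gamma>] by (simp add: bS mult.assoc)
    ultimately show ?thesis using b0 by simp
  qed
  have Sq: "(\<Sum>h. \<gamma>^h * q h) = interv_prob d0 \<pi> P \<gamma> I"
  proof -
    have "(\<Sum>h. \<gamma>^h * q h) = (\<Sum>h. \<gamma>^h * a h - \<gamma>^h * b h)"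
      by (simp add: q_eq right_diff_distrib)
    also have "\<dots> = (\<Sum>h. \<gamma>^h * a h) - (\<Sum>h. \<gamma>^h * b h)"
      by (rule suminf_diff[OF sum_a sum_b, symmetric])
    finally show ?thesis using Sb PG by (simp add: algebra_simps)
  qed
  have pointwise: "\<bar>Rt\<bar> * q h \<le> e h - g h \<and> e h - g h \<le> a h + \<bar>Rt\<bar> * q h" for h
  proof -
    let ?D = "\<lambda>xs. r (fst (last xs)) (snd (last xs)) - Gf I Rt r (cut I xs, length xs)"
    have ieg: "integrable (measure_pmf (?T h)) (\<lambda>xs. r (fst (last xs)) (snd (last xs)))"
      by (rule pmf_integrable_bnd) (rule rb)
    have igg: "integrable (measure_pmf (?T h)) (\<lambda>xs. Gf I Rt r (cut I xs, length xs))"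
      by (rule pmf_integrable_bnd) (rule Gb)
    have eg: "e h - g h = measure_pmf.expectation (?T h) ?D"
      unfolding e_def g_def by (rule Bochner_Integration.integral_diff[OF ieg igg, symmetric])
    have iD: "integrable (measure_pmf (?T h)) ?D" using ieg igg by auto
    have iF: "integrable (measure_pmf (?T h)) (\<lambda>xs. \<bar>Rt\<bar> * indicator F xs)"
      by (rule pmf_integrable_bnd[where B="\<bar>Rt\<bar>"]) (auto simp: indicator_def)
    have iAF: "integrable (measure_pmf (?T h)) (\<lambda>xs. indicator A xs + \<bar>Rt\<bar> * indicator F xs)"
      by (rule pmf_integrable_bnd[where B="1 + \<bar>Rt\<bar>"]) (auto simp: indicator_def)
    have pw: "\<bar>Rt\<bar> * indicator F xs \<le> ?D xs \<and> ?D xs \<le> indicator A xs + \<bar>Rt\<bar> * indicator F xs"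
      if "xs \<in> set_pmf (?T h)" for xs
    proof -
      have ne: "xs \<noteq> []" using that by (rule traj_nonempty)
      have xs: "xs = butlast xs @ [last xs]" using ne by simp
      have Aiff: "xs \<in> A \<longleftrightarrow> xs \<in> B \<or> last xs \<in> I"
        unfolding A_def B_def by (subst (1 2) xs) auto
      show ?thesis using orig_G[OF ne, of I Rt r] Aiff r_range[of "fst (last xs)" "snd (last xs)"] Rt
        unfolding F_def by (auto simp: indicator_def B_def)
    qed
    have L1: "measure_pmf.expectation (?T h) (\<lambda>xs. \<bar>Rt\<bar> * indicator F xs) \<le> measure_pmf.expectation (?T h) ?D"
      using pw by (intro integral_mono_AE iF iD) (auto simp: AE_measure_pmf_iff)
    have L2: "measure_pmf.expectation (?T h) ?D \<le> measure_pmf.expectation (?T h) (\<lambda>xs. indicator A xs + \<bar>Rt\<bar> * indicator F xs)"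
      using pw by (intro integral_mono_AE iAF iD) (auto simp: AE_measure_pmf_iff)
    have E1: "measure_pmf.expectation (?T h) (\<lambda>xs. \<bar>Rt\<bar> * indicator F xs) = \<bar>Rt\<bar> * q h"
      unfolding q_def by simp
    have E2: "measure_pmf.expectation (?T h) (\<lambda>xs. indicator A xs + \<bar>Rt\<bar> * indicator F xs) = a h + \<bar>Rt\<bar> * q h"
      unfolding q_def a_def
    proof (subst Bochner_Integration.integral_add)
      show "integrable (measure_pmf (?T h)) (indicator A :: _ \<Rightarrow> real)"
        by (rule pmf_integrable_bnd[where B=1]) (auto simp: indicator_def)
      show "integrable (measure_pmf (?T h)) (\<lambda>xs. \<bar>Rt\<bar> * indicator F xs :: real)"
        by (rule iF)
    qed simp
    show ?thesis using eg L1 L2 E1 E2 by linarith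
  qed
  have sum_lo: "summable (\<lambda>h. \<gamma>^h * (\<bar>Rt\<bar> * q h))"
    using summable_mult[OF sum_q, of "\<bar>Rt\<bar>"] by (simp add: algebra_simps)
  have sum_eg: "summable (\<lambda>h. \<gamma>^h * (e h - g h))"
    using summable_diff[OF sum_e sum_g] by (simp add: right_diff_distrib)
  have sum_hi: "summable (\<lambda>h. \<gamma>^h * (a h + \<bar>Rt\<bar> * q h))"
    using summable_add[OF sum_a sum_lo] by (simp add: distrib_left)
  have lo: "(\<Sum>h. \<gamma>^h * (\<bar>Rt\<bar> * q h)) \<le> (\<Sum>h. \<gamma>^h * (e h - g h))"
    by (rule suminf_le[OF _ sum_lo sum_eg]) (use pointwise gamma in \<open>auto intro: mult_left_mono\<close>)
  have hi: "(\<Sum>h. \<gamma>^h * (e h - g h)) \<le> (\<Sum>h. \<gamma>^h * (a h + \<bar>Rt\<bar> * q h))"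
    by (rule suminf_le[OF _ sum_eg sum_hi]) (use pointwise gamma in \<open>auto intro: mult_left_mono\<close>)
  have lo_eq: "(\<Sum>h. \<gamma>^h * (\<bar>Rt\<bar> * q h)) = \<bar>Rt\<bar> * interv_prob d0 \<pi> P \<gamma> I"
    using suminf_mult[OF sum_q, of "\<bar>Rt\<bar>"] Sq by (simp add: algebra_simps)
  have hi_eq: "(\<Sum>h. \<gamma>^h * (a h + \<bar>Rt\<bar> * q h)) = (\<Sum>h. \<gamma>^h * a h) + \<bar>Rt\<bar> * interv_prob d0 \<pi> P \<gamma> I"
  proof -
    have "(\<Sum>h. \<gamma>^h * (a h + \<bar>Rt\<bar> * q h)) = (\<Sum>h. \<gamma>^h * a h + \<gamma>^h * (\<bar>Rt\<bar> * q h))"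
      by (simp add: distrib_left)
    also have "\<dots> = (\<Sum>h. \<gamma>^h * a h) + (\<Sum>h. \<gamma>^h * (\<bar>Rt\<bar> * q h))"
      by (rule suminf_add[OF sum_a sum_lo, symmetric])
    finally show ?thesis using lo_eq by simp
  qed
  have Sa: "(\<Sum>h. \<gamma>^h * a h) = interv_prob d0 \<pi> P \<gamma> I / (1 - \<gamma>)"
    using PG gamma by (simp add: field_simps)
  have fin: "(\<bar>Rt\<bar> + 1 / (1 - \<gamma>)) * interv_prob d0 \<pi> P \<gamma> I
      = interv_prob d0 \<pi> P \<gamma> I / (1 - \<gamma>) + \<bar>Rt\<bar> * interv_prob d0 \<pi> P \<gamma> I"
    by (simp add: algebra_simps)
  show ?thesis using lo hi lo_eq hi_eq Sa fin diff by simp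
qed

end
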